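(* Let $\mathcal{T}=\mathcal{X}=\mathcal{Y}=\{0,1\}$ and $P\in\Delta_{\mathcal{T},\mathcal{X},\mathcal{Y}}$ with $P(T=0)>0$, $P(T=1)>0$. Set $b=P(X=0\mid T=0)$, $c=P(X=0\mid T=1)$, $d=P(Y=0\mid T=0)$, $e=P(Y=0\mid T=1)$. Then $\arg\max_{Q\in\Delta_P}H_Q(T\mid X,Y)$ consists of a single point unless $b=c$ and $d=e$.
   Context: $\Delta_{\mathcal{T},\mathcal{X},\mathcal{Y}}$ is the set of all joint distributions of $(T,X,Y)$. For $P$, $\Delta_P=\{Q\in\Delta_{\mathcal{T},\mathcal{X},\mathcal{Y}}: Q(X=x,T=t)=P(X=x,T=t),\ Q(Y=y,T=t)=P(Y=y,T=t)\ \forall x,y,t\}$. $H_Q(T\mid X,Y)$ is the conditional entropy under $Q$. *)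

theory Defs
  imports Complex_Main
begin

text \<open>A joint distribution of (T,X,Y) on {0,1}^3 is represented as a function
  Q t x y = Q(T=t, X=x, Y=y), nonnegative, vanishing outside {0,1}^3, summing to 1.\<close>

definition joint_dists :: "(nat \<Rightarrow> nat \<Rightarrow> nat \<Rightarrow> real) set" where
  "joint_dists = {Q. (\<forall>t x y. 0 \<le> Q t x y)
      \<and> (\<forall>t x y. Q t x y \<noteq> 0 \<longrightarrow> t \<in> {0,1} \<and> x \<in> {0,1} \<and> y \<in> {0,1})
      \<and> (\<Sum>t\<in>{0,1}. \<Sum>x\<in>{0,1}. \<Sum>y\<in>{0,1}. Q t x y) = 1}"

definition marg_XT :: "(nat \<Rightarrow> nat \<Rightarrow> nat \<Rightarrow> real) \<Rightarrow> nat \<Rightarrow> nat \<Rightarrow> real" where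
  "marg_XT Q x t = (\<Sum>y\<in>{0,1}. Q t x y)"

definition marg_YT :: "(nat \<Rightarrow> nat \<Rightarrow> nat \<Rightarrow> real) \<Rightarrow> nat \<Rightarrow> nat \<Rightarrow> real" where
  "marg_YT Q y t = (\<Sum>x\<in>{0,1}. Q t x y)"

definition marg_XY :: "(nat \<Rightarrow> nat \<Rightarrow> nat \<Rightarrow> real) \<Rightarrow> nat \<Rightarrow> nat \<Rightarrow> real" where
  "marg_XY Q x y = (\<Sum>t\<in>{0,1}. Q t x y)"

definition marg_T :: "(nat \<Rightarrow> nat \<Rightarrow> nat \<Rightarrow> real) \<Rightarrow> nat \<Rightarrow> real" where
  "marg_T Q t = (\<Sum>x\<in>{0,1}. \<Sum>y\<in>{0,1}. Q t x y)"

definition Delta_P :: "(nat \<Rightarrow> nat \<Rightarrow> nat \<Rightarrow> real) \<Rightarrow> (nat \<Rightarrow> nat \<Rightarrow> nat \<Rightarrow> real) set" where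
  "Delta_P P = {Q \<in> joint_dists. (\<forall>x t. marg_XT Q x t = marg_XT P x t)
                                 \<and> (\<forall>y t. marg_YT Q y t = marg_YT P y t)}"

definition cond_entropy :: "(nat \<Rightarrow> nat \<Rightarrow> nat \<Rightarrow> real) \<Rightarrow> real" where
  "cond_entropy Q = - (\<Sum>t\<in>{0,1}. \<Sum>x\<in>{0,1}. \<Sum>y\<in>{0,1}.
      (if Q t x y = 0 then 0 else Q t x y * log 2 (Q t x y / marg_XY Q x y)))"

definition argmax_cond_entropy :: "(nat \<Rightarrow> nat \<Rightarrow> nat \<Rightarrow> real) \<Rightarrow> (nat \<Rightarrow> nat \<Rightarrow> nat \<Rightarrow> real) set" where
  "argmax_cond_entropy P = {Q \<in> Delta_P P. \<forall>Q' \<in> Delta_P P. cond_entropy Q' \<le> cond_entropy Q}"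

end

theory Submission
  imports Defs "HOL-Analysis.Analysis"
begin

definition phi :: "real \<Rightarrow> real" where "phi x = x * ln x"
definition G :: "real \<Rightarrow> real \<Rightarrow> real" where "G a b = phi (a + b) - phi a - phi b"

lemma cell:
  assumes "0 \<le> a" "0 \<le> b"
  shows "(if a = 0 then 0 else a * log 2 (a / (a + b))) + (if b = 0 then 0 else b * log 2 (b / (a + b)))
         = - (G a b / ln 2)"
proof (cases "a = 0")
  case True
  then show ?thesis by (simp add: G_def phi_def)
next
  case a: False
  show ?thesis
  proof (cases "b = 0")
    case True
    then show ?thesis by (simp add: G_def phi_def)
  next
    case False
    then have a0: "a > 0" and b0: "b > 0" using a assms by auto
    have L1: "log 2 (a / (a + b)) = (ln a - ln (a + b)) / ln 2"
      using a0 b0 by (simp add: log_def ln_divide_pos)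
    have L2: "log 2 (b / (a + b)) = (ln b - ln (a + b)) / ln 2"
      using a0 b0 by (simp add: log_def ln_divide_pos)
    have eq: "a * log 2 (a / (a + b)) + b * log 2 (b / (a + b)) = - (G a b / ln 2)"
      unfolding L1 L2 G_def phi_def
    proof -
      have "a * ((ln a - ln (a + b)) / ln 2) + b * ((ln b - ln (a + b)) / ln 2)
           = (a * ln a + b * ln b - (a + b) * ln (a + b)) / ln 2"
        by (simp add: diff_divide_distrib add_divide_distrib algebra_simps)
      also have "\<dots> = - (((a + b) * ln (a + b) - a * ln a - b * ln b) / ln 2)"
        by (simp add: diff_divide_distrib algebra_simps)
      finally show "a * ((ln a - ln (a + b)) / ln 2) + b * ((ln b - ln (a + b)) / ln 2) =
          - (((a + b) * ln (a + b) - a * ln a - b * ln b) / ln 2)" .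
    qed
    show ?thesis using eq a0 b0 by simp
  qed
qed

lemma ent:
  assumes "\<forall>t x y. 0 \<le> Q t x y"
  shows "cond_entropy Q = G (Q 0 0 0) (Q 1 0 0) / ln 2 + G (Q 0 0 1) (Q 1 0 1) / ln 2
     + G (Q 0 1 0) (Q 1 1 0) / ln 2 + G (Q 0 1 1) (Q 1 1 1) / ln 2"
proof -
  have c: "\<And>x y. (if Q 0 x y = 0 then 0 else Q 0 x y * log 2 (Q 0 x y / (Q 0 x y + Q 1 x y)))
     + (if Q 1 x y = 0 then 0 else Q 1 x y * log 2 (Q 1 x y / (Q 0 x y + Q 1 x y)))
     = - (G (Q 0 x y) (Q 1 x y) / ln 2)"
    using assms by (intro cell) auto
  have s: "\<And>f :: nat \<Rightarrow> real. sum f {0,1} = f 0 + f 1" by simp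
  show ?thesis
    unfolding cond_entropy_def marg_XY_def s
    using c[of 0 0] c[of 0 1] c[of 1 0] c[of 1 1] by linarith
qed

lemma ln_strict:
  fixes y :: real assumes "y > 0" "ln y = y - 1" shows "y = 1"
proof (rule ccontr)
  assume ne: "y \<noteq> 1"
  define r where "r = sqrt y"
  have r: "r > 0" "r * r = y" using assms by (auto simp: r_def)
  have "ln y = 2 * ln r" using r ln_mult[of r r] by simp
  also have "\<dots> \<le> 2 * (r - 1)" using ln_le_minus_one[OF r(1)] by simp
  also have "\<dots> < y - 1"
  proof -
    have "r \<noteq> 1" using ne r by auto
    then have "(r - 1)\<^sup>2 > 0" by simp
    then have "(r - 1) * (r - 1) > 0" by (simp add: power2_eq_square)
    then show ?thesis using r by (simp add: algebra_simps)
  qed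
  finally show False using assms by simp
qed

lemma summand:
  fixes u m U M :: real
  assumes "M > 0" "U \<ge> 0" "u \<ge> 0" "m \<ge> 0" "u > 0 \<longrightarrow> m > 0 \<and> U > 0"
  shows "u * (ln u - ln m - ln U + ln M) \<ge> u - m * U / M"
    and "u * (ln u - ln m - ln U + ln M) = u - m * U / M \<Longrightarrow> u * M = m * U"
proof -
  have A: "u * (ln u - ln m - ln U + ln M) \<ge> u - m * U / M \<and>
     (u * (ln u - ln m - ln U + ln M) = u - m * U / M \<longrightarrow> u * M = m * U)"
  proof (cases "u = 0")
    case True
    then show ?thesis using assms by (auto simp: field_simps)
  next
    case False
    then have u: "u > 0" and m: "m > 0" and U: "U > 0" using assms by auto
    define y where "y = (m * U) / (u * M)"
    have y: "y > 0" using u m U assms by (simp add: y_def)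
    have eq: "ln u - ln m - ln U + ln M = - ln y"
    proof -
      have "ln y = ln (m * U) - ln (u * M)" unfolding y_def using u m U assms by (intro ln_divide_pos) auto
      also have "\<dots> = ln m + ln U - (ln u + ln M)" using u m U assms by (simp add: ln_mult)
      finally show ?thesis by simp
    qed
    have ly: "ln y \<le> y - 1" using ln_le_minus_one y by blast
    have rhs: "u - m * U / M = u * (1 - y)" using u assms by (simp add: y_def field_simps)
    have "u * (- ln y) \<ge> u * (1 - y)" using ly u by (intro mult_left_mono) auto
    moreover have "u * (- ln y) = u * (1 - y) \<longrightarrow> u * M = m * U"
    proof
      assume "u * (- ln y) = u * (1 - y)"
      then have "- ln y = 1 - y" using u mult_cancel_left[of u "- ln y" "1 - y"] by simp
      then have "ln y = y - 1" by simp
      then have "y = 1" using ln_strict y by blast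
      then show "u * M = m * U" using u assms by (simp add: y_def field_simps)
    qed
    ultimately show ?thesis using eq rhs by simp
  qed
  then show "u * (ln u - ln m - ln U + ln M) \<ge> u - m * U / M"
    and "u * (ln u - ln m - ln U + ln M) = u - m * U / M \<Longrightarrow> u * M = m * U" using A by blast+
qed

lemma gap:
  fixes u0 u1 v0 v1 :: real
  assumes nn: "0 \<le> u0" "0 \<le> u1" "0 \<le> v0" "0 \<le> v1"
  shows "0 \<le> 2 * G ((u0 + v0) / 2) ((u1 + v1) / 2) - G u0 u1 - G v0 v1"
    and "2 * G ((u0 + v0) / 2) ((u1 + v1) / 2) - G u0 u1 - G v0 v1 = 0 \<Longrightarrow> u0 * v1 = u1 * v0"
proof -
  define m0 where "m0 = (u0 + v0) / 2"
  define m1 where "m1 = (u1 + v1) / 2"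
  define M where "M = m0 + m1"
  define U where "U = u0 + u1"
  define V where "V = v0 + v1"
  have res: "0 \<le> 2 * G m0 m1 - G u0 u1 - G v0 v1 \<and>
        (2 * G m0 m1 - G u0 u1 - G v0 v1 = 0 \<longrightarrow> u0 * v1 = u1 * v0)"
  proof (cases "M = 0")
    case True
    then have "u0 = 0 \<and> u1 = 0 \<and> v0 = 0 \<and> v1 = 0" using nn unfolding M_def m0_def m1_def
      by (intro conjI order.antisym; simp add: field_simps)
    then show ?thesis by (simp add: G_def phi_def m0_def m1_def)
  next
    case False
    have "0 \<le> M" unfolding M_def m0_def m1_def using nn
      by (intro add_nonneg_nonneg divide_nonneg_nonneg) auto
    then have M: "M > 0" using False by simp
    have U: "U \<ge> 0" "V \<ge> 0" "m0 \<ge> 0" "m1 \<ge> 0" using nn by (auto simp: U_def V_def m0_def m1_def)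
    define S where "S = (\<lambda>u m W. u * (ln u - ln m - ln W + ln M))"
    define L where "L = (\<lambda>u m W. u - m * W / M)"
    have id: "2 * G m0 m1 - G u0 u1 - G v0 v1 = S u0 m0 U + S u1 m1 U + S v0 m0 V + S v1 m1 V"
      unfolding S_def G_def phi_def M_def U_def V_def m0_def m1_def
      by (simp add: field_simps)
    have lid: "L u0 m0 U + L u1 m1 U + L v0 m0 V + L v1 m1 V = 0"
      using M unfolding L_def
      by (simp add: field_simps M_def U_def V_def m0_def m1_def)
    have p1: "u0 > 0 \<longrightarrow> m0 > 0 \<and> U > 0" using nn by (auto simp: m0_def U_def)
    have p2: "u1 > 0 \<longrightarrow> m1 > 0 \<and> U > 0" using nn by (auto simp: m1_def U_def)
    have p3: "v0 > 0 \<longrightarrow> m0 > 0 \<and> V > 0" using nn by (auto simp: m0_def V_def)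
    have p4: "v1 > 0 \<longrightarrow> m1 > 0 \<and> V > 0" using nn by (auto simp: m1_def V_def)
    have s1: "L u0 m0 U \<le> S u0 m0 U" "S u0 m0 U = L u0 m0 U \<Longrightarrow> u0 * M = m0 * U"
      using summand[OF M U(1) nn(1) U(3) p1] unfolding S_def L_def by auto
    have s2: "L u1 m1 U \<le> S u1 m1 U" "S u1 m1 U = L u1 m1 U \<Longrightarrow> u1 * M = m1 * U"
      using summand[OF M U(1) nn(2) U(4) p2] unfolding S_def L_def by auto
    have s3: "L v0 m0 V \<le> S v0 m0 V" "S v0 m0 V = L v0 m0 V \<Longrightarrow> v0 * M = m0 * V"
      using summand[OF M U(2) nn(3) U(3) p3] unfolding S_def L_def by auto
    have s4: "L v1 m1 V \<le> S v1 m1 V" "S v1 m1 V = L v1 m1 V \<Longrightarrow> v1 * M = m1 * V"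
      using summand[OF M U(2) nn(4) U(4) p4] unfolding S_def L_def by auto
    have ge: "0 \<le> 2 * G m0 m1 - G u0 u1 - G v0 v1"
      using id lid s1(1) s2(1) s3(1) s4(1) by linarith
    moreover have "2 * G m0 m1 - G u0 u1 - G v0 v1 = 0 \<longrightarrow> u0 * v1 = u1 * v0"
    proof
      assume z: "2 * G m0 m1 - G u0 u1 - G v0 v1 = 0"
      have e1: "u0 * M = m0 * U" using s1(2) id lid z s1(1) s2(1) s3(1) s4(1) by linarith
      have e2: "u1 * M = m1 * U" using s2(2) id lid z s1(1) s2(1) s3(1) s4(1) by linarith
      have e3: "v0 * M = m0 * V" using s3(2) id lid z s1(1) s2(1) s3(1) s4(1) by linarith
      have e4: "v1 * M = m1 * V" using s4(2) id lid z s1(1) s2(1) s3(1) s4(1) by linarith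
      have "(u0 * v1) * (M * M) = (u0 * M) * (v1 * M)" by (simp add: algebra_simps)
      also have "\<dots> = (m0 * U) * (m1 * V)" using e1 e4 by simp
      also have "\<dots> = (u1 * M) * (v0 * M)" using e2 e3 by (simp add: algebra_simps)
      also have "\<dots> = (u1 * v0) * (M * M)" by (simp add: algebra_simps)
      finally show "u0 * v1 = u1 * v0" using M by simp
    qed
    ultimately show ?thesis by blast
  qed
  then show "0 \<le> 2 * G ((u0 + v0) / 2) ((u1 + v1) / 2) - G u0 u1 - G v0 v1"
    and "2 * G ((u0 + v0) / 2) ((u1 + v1) / 2) - G u0 u1 - G v0 v1 = 0 \<Longrightarrow> u0 * v1 = u1 * v0"
    unfolding m0_def m1_def by blast+
qed

lemma xlnx_cont: "continuous_on {0..} (\<lambda>x::real. x * ln x)"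
proof -
  have "continuous (at x within {0..}) (\<lambda>x::real. x * ln x)" if "x \<ge> 0" for x
  proof (cases "x = 0")
    case True
    have "((\<lambda>x::real. x * ln x) \<longlongrightarrow> 0) (at_right 0)"
    proof (rule tendsto_sandwich[of "\<lambda>x. - 2 * sqrt x" _ _ "\<lambda>x. 0"])
      have b: "- 2 * sqrt x \<le> x * ln x \<and> x * ln x \<le> 0" if "0 < x" "x < 1" for x :: real
      proof -
        define r where "r = sqrt x"
        have r: "r > 0" "r * r = x" using that by (auto simp: r_def)
        have "ln (1 / r) \<le> 1 / r - 1" using ln_le_minus_one r by simp
        then have "- ln x \<le> 2 * (1/r - 1)" using r
        proof -
          have "ln x = ln r + ln r" using r ln_mult[of r r] by simp
          moreover have "ln (1 / r) = - ln r" using r by (simp add: ln_div)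
          ultimately show ?thesis using \<open>ln (1 / r) \<le> 1 / r - 1\<close> by simp
        qed
        then have "x * (- ln x) \<le> x * (2 * (1/r - 1))" using that by (intro mult_left_mono) auto
        also have "\<dots> = 2 * (x / r) - 2 * x" by (simp add: algebra_simps)
        also have "x / r = r" using r by (auto simp: field_simps)
        also have "2 * r - 2 * x \<le> 2 * r" using that by simp
        finally have 1: "- 2 * sqrt x \<le> x * ln x" by (simp add: r_def)
        have "ln x \<le> 0" using that by simp
        then have "x * ln x \<le> 0" using that by (simp add: mult_nonneg_nonpos)
        with 1 show ?thesis by simp
      qed
      have ev: "\<forall>\<^sub>F x in at_right 0. 0 < x \<and> x < (1::real)"
        by (rule eventually_at_rightI[of 0 1]) auto
      show "\<forall>\<^sub>F x in at_right 0. - 2 * sqrt x \<le> x * ln x"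
        using ev by (rule eventually_mono) (use b in blast)
      have "eventually (\<lambda>x. x * ln x \<le> 0) (at_right (0::real))"
        using ev by (rule eventually_mono) (use b in blast)
      then show "\<forall>\<^sub>F x in at_right 0. x * ln x \<le> (0::real)" by simp
      have "((\<lambda>x::real. - 2 * sqrt x) \<longlongrightarrow> - 2 * sqrt 0) (at_right 0)"
        by (intro tendsto_intros)
      then show "((\<lambda>x::real. - 2 * sqrt x) \<longlongrightarrow> 0) (at_right 0)" by simp
    qed simp
    then show ?thesis using True by (simp add: continuous_within at_within_Ici_at_right)
  next
    case False
    then have "x > 0" using that by simp
    then have "continuous (at x) (\<lambda>x::real. x * ln x)" by (intro continuous_intros) auto
    then show ?thesis using continuous_at_imp_continuous_at_within by blast
  qed
  then show ?thesis using continuous_on_eq_continuous_within by blast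
qed


lemma xlnx_cont': "continuous_on {0..} phi"
  unfolding phi_def by (rule xlnx_cont)

lemma cont_phi:
  assumes "continuous_on K f" "\<forall>z\<in>K. 0 \<le> f z"
  shows "continuous_on K (\<lambda>z. phi (f z))"
  by (rule continuous_on_compose2[OF xlnx_cont' assms(1)]) (use assms(2) in auto)

lemma cont_G:
  assumes "continuous_on K f" "continuous_on K g" "\<forall>z\<in>K. 0 \<le> f z" "\<forall>z\<in>K. 0 \<le> g z"
  shows "continuous_on K (\<lambda>z. G (f z) (g z))"
proof -
  have "continuous_on K (\<lambda>z. phi (f z + g z))"
    using assms by (intro cont_phi continuous_intros) auto
  moreover have "continuous_on K (\<lambda>z. phi (f z))" using assms by (intro cont_phi) auto
  moreover have "continuous_on K (\<lambda>z. phi (g z))" using assms by (intro cont_phi) auto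
  ultimately show ?thesis unfolding G_def by (intro continuous_intros)
qed

lemma le1: "(n::nat) \<le> 1 \<longleftrightarrow> n = 0 \<or> n = 1" by auto

lemma mem01: "(n::nat) \<in> {0,1} \<longleftrightarrow> n \<le> 1" by auto

lemma s01: "sum f {0::nat,1} = f 0 + f 1" by simp

lemma dp_facts:
  assumes "Q \<in> Delta_P P"
  shows "\<forall>t x y. 0 \<le> Q t x y"
    and "\<forall>t x y. Q t x y \<noteq> 0 \<longrightarrow> t \<le> 1 \<and> x \<le> 1 \<and> y \<le> 1"
    and "Q 0 0 0 + Q 0 0 1 + Q 0 1 0 + Q 0 1 1 + Q 1 0 0 + Q 1 0 1 + Q 1 1 0 + Q 1 1 1 = 1"
    and "\<And>t. Q t 0 0 + Q t 0 1 = P t 0 0 + P t 0 1"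
    and "\<And>t. Q t 1 0 + Q t 1 1 = P t 1 0 + P t 1 1"
    and "\<And>t. Q t 0 0 + Q t 1 0 = P t 0 0 + P t 1 0"
    and "\<And>t. Q t 0 1 + Q t 1 1 = P t 0 1 + P t 1 1"
proof -
  have j: "Q \<in> joint_dists" and mx: "\<forall>x t. marg_XT Q x t = marg_XT P x t"
    and my: "\<forall>y t. marg_YT Q y t = marg_YT P y t"
    using assms unfolding Delta_P_def by auto
  show "\<forall>t x y. 0 \<le> Q t x y" using j unfolding joint_dists_def by auto
  show "\<forall>t x y. Q t x y \<noteq> 0 \<longrightarrow> t \<le> 1 \<and> x \<le> 1 \<and> y \<le> 1"
    using j unfolding joint_dists_def mem01 by blast
  have "(\<Sum>t\<in>{0,1}. \<Sum>x\<in>{0,1}. \<Sum>y\<in>{0,1}. Q t x y) = 1" using j unfolding joint_dists_def by auto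
  then show "Q 0 0 0 + Q 0 0 1 + Q 0 1 0 + Q 0 1 1 + Q 1 0 0 + Q 1 0 1 + Q 1 1 0 + Q 1 1 1 = 1"
    unfolding s01 by simp
  fix t
  show "Q t 0 0 + Q t 0 1 = P t 0 0 + P t 0 1" using mx[rule_format, of 0 t] unfolding marg_XT_def s01 .
  show "Q t 1 0 + Q t 1 1 = P t 1 0 + P t 1 1" using mx[rule_format, of 1 t] unfolding marg_XT_def s01 .
  show "Q t 0 0 + Q t 1 0 = P t 0 0 + P t 1 0" using my[rule_format, of 0 t] unfolding marg_YT_def s01 .
  show "Q t 0 1 + Q t 1 1 = P t 0 1 + P t 1 1" using my[rule_format, of 1 t] unfolding marg_YT_def s01 .
qed

lemma mid_in:
  assumes "Q1 \<in> Delta_P P" "Q2 \<in> Delta_P P"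
  shows "(\<lambda>t x y. (Q1 t x y + Q2 t x y) / 2) \<in> Delta_P P"
proof -
  have j1: "Q1 \<in> joint_dists" and mx1: "\<forall>x t. marg_XT Q1 x t = marg_XT P x t"
    and my1: "\<forall>y t. marg_YT Q1 y t = marg_YT P y t"
    using assms unfolding Delta_P_def by auto
  have j2: "Q2 \<in> joint_dists" and mx2: "\<forall>x t. marg_XT Q2 x t = marg_XT P x t"
    and my2: "\<forall>y t. marg_YT Q2 y t = marg_YT P y t"
    using assms unfolding Delta_P_def by auto
  have n1: "\<forall>t x y. 0 \<le> Q1 t x y" and su1: "\<forall>t x y. Q1 t x y \<noteq> 0 \<longrightarrow> t \<in> {0,1} \<and> x \<in> {0,1} \<and> y \<in> {0,1}"
    and sm1: "(\<Sum>t\<in>{0,1}. \<Sum>x\<in>{0,1}. \<Sum>y\<in>{0,1}. Q1 t x y) = 1"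
    using j1 unfolding joint_dists_def by auto
  have n2: "\<forall>t x y. 0 \<le> Q2 t x y" and su2: "\<forall>t x y. Q2 t x y \<noteq> 0 \<longrightarrow> t \<in> {0,1} \<and> x \<in> {0,1} \<and> y \<in> {0,1}"
    and sm2: "(\<Sum>t\<in>{0,1}. \<Sum>x\<in>{0,1}. \<Sum>y\<in>{0,1}. Q2 t x y) = 1"
    using j2 unfolding joint_dists_def by auto
  have "\<forall>t x y. (Q1 t x y + Q2 t x y) / 2 \<noteq> 0 \<longrightarrow> t \<in> {0,1} \<and> x \<in> {0,1} \<and> y \<in> {0,1}"
  proof (intro allI impI)
    fix t x y assume "(Q1 t x y + Q2 t x y) / 2 \<noteq> 0"
    then have "Q1 t x y \<noteq> 0 \<or> Q2 t x y \<noteq> 0" by auto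
    then show "t \<in> {0,1} \<and> x \<in> {0,1} \<and> y \<in> {0,1}" using su1 su2 by blast
  qed
  moreover have "\<forall>t x y. 0 \<le> (Q1 t x y + Q2 t x y) / 2" using n1 n2 by (simp add: add_nonneg_nonneg)
  moreover have "(\<Sum>t\<in>{0,1}. \<Sum>x\<in>{0,1}. \<Sum>y\<in>{0,1}. (Q1 t x y + Q2 t x y) / 2) = 1"
    using sm1 sm2 unfolding s01 by (simp add: field_simps)
  ultimately have "(\<lambda>t x y. (Q1 t x y + Q2 t x y) / 2) \<in> joint_dists"
    unfolding joint_dists_def by blast
  moreover have "\<forall>x t. marg_XT (\<lambda>t x y. (Q1 t x y + Q2 t x y) / 2) x t = marg_XT P x t"
  proof (intro allI)
    fix x t
    show "marg_XT (\<lambda>t x y. (Q1 t x y + Q2 t x y) / 2) x t = marg_XT P x t"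
      using mx1[rule_format, of x t] mx2[rule_format, of x t] unfolding marg_XT_def s01
      by (simp add: field_simps)
  qed
  moreover have "\<forall>y t. marg_YT (\<lambda>t x y. (Q1 t x y + Q2 t x y) / 2) y t = marg_YT P y t"
  proof (intro allI)
    fix y t
    show "marg_YT (\<lambda>t x y. (Q1 t x y + Q2 t x y) / 2) y t = marg_YT P y t"
      using my1[rule_format, of y t] my2[rule_format, of y t] unfolding marg_YT_def s01
      by (simp add: field_simps)
  qed
  ultimately show ?thesis unfolding Delta_P_def by blast
qed

lemma cross_eqs:
  assumes "Q1 \<in> argmax_cond_entropy P" "Q2 \<in> argmax_cond_entropy P"
  shows "\<And>x y. Q1 0 x y * Q2 1 x y = Q1 1 x y * Q2 0 x y"
proof -
  have d1: "Q1 \<in> Delta_P P" and d2: "Q2 \<in> Delta_P P"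
    and h1: "cond_entropy Q2 \<le> cond_entropy Q1" and h2: "cond_entropy Q1 \<le> cond_entropy Q2"
    using assms unfolding argmax_cond_entropy_def by auto
  define Qm where "Qm = (\<lambda>t x y. (Q1 t x y + Q2 t x y) / 2)"
  have dm: "Qm \<in> Delta_P P" unfolding Qm_def using mid_in[OF d1 d2] .
  have hm: "cond_entropy Qm \<le> cond_entropy Q1" using assms(1) dm unfolding argmax_cond_entropy_def by auto
  have n1: "\<forall>t x y. 0 \<le> Q1 t x y" using dp_facts(1)[OF d1] .
  have n2: "\<forall>t x y. 0 \<le> Q2 t x y" using dp_facts(1)[OF d2] .
  have nm: "\<forall>t x y. 0 \<le> Qm t x y" using dp_facts(1)[OF dm] .
  define g where "g = (\<lambda>x y. 2 * G ((Q1 0 x y + Q2 0 x y) / 2) ((Q1 1 x y + Q2 1 x y) / 2)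
                        - G (Q1 0 x y) (Q1 1 x y) - G (Q2 0 x y) (Q2 1 x y))"
  have gnn: "\<And>x y. 0 \<le> g x y" unfolding g_def using n1 n2 by (intro gap(1)) auto
  have ln2: "ln (2::real) > 0" by simp
  have "2 * cond_entropy Qm - cond_entropy Q1 - cond_entropy Q2
      = (g 0 0 + g 0 1 + g 1 0 + g 1 1) / ln 2"
    unfolding ent[OF n1] ent[OF n2] ent[OF nm] unfolding g_def Qm_def
    by (simp add: add_divide_distrib diff_divide_distrib)
  moreover have "2 * cond_entropy Qm - cond_entropy Q1 - cond_entropy Q2 \<le> 0"
    using hm h1 h2 by linarith
  ultimately have "(g 0 0 + g 0 1 + g 1 0 + g 1 1) / ln 2 \<le> 0" by simp
  then have "g 0 0 + g 0 1 + g 1 0 + g 1 1 \<le> 0" using ln2 by (simp add: divide_le_0_iff)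
  then have z: "g 0 0 = 0" "g 0 1 = 0" "g 1 0 = 0" "g 1 1 = 0"
    using gnn[of 0 0] gnn[of 0 1] gnn[of 1 0] gnn[of 1 1] by linarith+
  fix x y
  show "Q1 0 x y * Q2 1 x y = Q1 1 x y * Q2 0 x y"
  proof (cases "x \<le> 1 \<and> y \<le> 1")
    case True
    then have "g x y = 0" using z unfolding le1 by auto
    then show ?thesis unfolding g_def using n1 n2 by (intro gap(2)) auto
  next
    case False
    have "Q1 0 x y = 0" using dp_facts(2)[OF d1] False by blast
    moreover have "Q2 0 x y = 0" using dp_facts(2)[OF d2] False by blast
    ultimately show ?thesis by simp
  qed
qed

lemma uniq:
  assumes "marg_T P 0 > 0" and "marg_T P 1 > 0"
    and hyp: "\<not> (marg_XT P 0 0 / marg_T P 0 = marg_XT P 0 1 / marg_T P 1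
            \<and> marg_YT P 0 0 / marg_T P 0 = marg_YT P 0 1 / marg_T P 1)"
    and a1: "Q1 \<in> argmax_cond_entropy P" and a2: "Q2 \<in> argmax_cond_entropy P"
  shows "Q1 = Q2"
proof -
  have d1: "Q1 \<in> Delta_P P" and d2: "Q2 \<in> Delta_P P"
    using a1 a2 unfolding argmax_cond_entropy_def by auto
  note cr = cross_eqs[OF a1 a2]
  define d where "d = (\<lambda>t. Q2 t 0 0 - Q1 t 0 0)"
  have e01: "\<And>t. Q2 t 0 1 = Q1 t 0 1 - d t"
    using dp_facts(4)[OF d1] dp_facts(4)[OF d2] unfolding d_def by (metis add_diff_cancel_left' add_diff_eq diff_add_eq diff_diff_eq2)
  have e10: "\<And>t. Q2 t 1 0 = Q1 t 1 0 - d t"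
    using dp_facts(6)[OF d1] dp_facts(6)[OF d2] unfolding d_def by (metis add_diff_cancel_left' add_diff_eq diff_add_eq diff_diff_eq2)
  have e11: "\<And>t. Q2 t 1 1 = Q1 t 1 1 + d t"
  proof -
    fix t show "Q2 t 1 1 = Q1 t 1 1 + d t"
      using dp_facts(5)[OF d1, of t] dp_facts(5)[OF d2, of t] e10[of t] by linarith
  qed
  have e00: "\<And>t. Q2 t 0 0 = Q1 t 0 0 + d t" unfolding d_def by simp
  have c: "\<And>x y. x \<le> 1 \<Longrightarrow> y \<le> 1 \<Longrightarrow> Q1 0 x y * d 1 = Q1 1 x y * d 0"
  proof -
    fix x y :: nat assume "x \<le> 1" "y \<le> 1"
    then have "(x = 0 \<and> y = 0) \<or> (x = 0 \<and> y = 1) \<or> (x = 1 \<and> y = 0) \<or> (x = 1 \<and> y = 1)"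
      unfolding le1 by auto
    then show "Q1 0 x y * d 1 = Q1 1 x y * d 0"
    proof (elim disjE conjE)
      assume "x = 0" "y = 0"
      have "Q1 0 0 0 * (Q1 1 0 0 + d 1) = Q1 1 0 0 * (Q1 0 0 0 + d 0)" using cr[of 0 0] e00 by simp
      then show ?thesis using \<open>x = 0\<close> \<open>y = 0\<close> by (simp add: algebra_simps)
    next
      assume "x = 0" "y = 1"
      have "Q1 0 0 1 * (Q1 1 0 1 - d 1) = Q1 1 0 1 * (Q1 0 0 1 - d 0)" using cr[of 0 1] e01 by simp
      then show ?thesis using \<open>x = 0\<close> \<open>y = 1\<close> by (simp add: algebra_simps)
    next
      assume "x = 1" "y = 0"
      have "Q1 0 1 0 * (Q1 1 1 0 - d 1) = Q1 1 1 0 * (Q1 0 1 0 - d 0)" using cr[of 1 0] e10 by simp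
      then show ?thesis using \<open>x = 1\<close> \<open>y = 0\<close> by (simp add: algebra_simps)
    next
      assume "x = 1" "y = 1"
      have "Q1 0 1 1 * (Q1 1 1 1 + d 1) = Q1 1 1 1 * (Q1 0 1 1 + d 0)" using cr[of 1 1] e11 by simp
      then show ?thesis using \<open>x = 1\<close> \<open>y = 1\<close> by (simp add: algebra_simps)
    qed
  qed
  define p0 where "p0 = marg_T P 0"
  define p1 where "p1 = marg_T P 1"
  have p0: "p0 = Q1 0 0 0 + Q1 0 0 1 + Q1 0 1 0 + Q1 0 1 1"
    using dp_facts(4,5)[OF d1, of 0] unfolding p0_def marg_T_def s01 by simp
  have p1: "p1 = Q1 1 0 0 + Q1 1 0 1 + Q1 1 1 0 + Q1 1 1 1"
    using dp_facts(4,5)[OF d1, of 1] unfolding p1_def marg_T_def s01 by simp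
  have pp: "p0 * d 1 = p1 * d 0"
    unfolding p0 p1 using c[of 0 0] c[of 0 1] c[of 1 0] c[of 1 1] by (simp add: algebra_simps)
  have p0pos: "p0 > 0" and p1pos: "p1 > 0" using assms(1,2) unfolding p0_def p1_def by auto
  show ?thesis
  proof (cases "d 0 = 0")
    case True
    then have "d 1 = 0" using pp p0pos by simp
    show ?thesis
    proof (intro ext)
      fix t x y
      show "Q1 t x y = Q2 t x y"
      proof (cases "t \<le> 1 \<and> x \<le> 1 \<and> y \<le> 1")
        case cube: True
        then have dt: "d t = 0" using \<open>d 0 = 0\<close> \<open>d 1 = 0\<close> unfolding le1 by auto
        from cube have "(x = 0 \<and> y = 0) \<or> (x = 0 \<and> y = 1) \<or> (x = 1 \<and> y = 0) \<or> (x = 1 \<and> y = 1)"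
          unfolding le1 by auto
        then show ?thesis using e00[of t] e01[of t] e10[of t] e11[of t] dt by auto
      next
        case False
        then show ?thesis using dp_facts(2)[OF d1] dp_facts(2)[OF d2] by metis
      qed
    qed
  next
    case False
    have r: "\<And>x y. x \<le> 1 \<Longrightarrow> y \<le> 1 \<Longrightarrow> Q1 0 x y * p1 = Q1 1 x y * p0"
    proof -
      fix x y :: nat assume "x \<le> 1" "y \<le> 1"
      have "(Q1 0 x y * p1) * d 0 = Q1 0 x y * (p0 * d 1)" using pp by (simp add: algebra_simps)
      also have "\<dots> = (Q1 0 x y * d 1) * p0" by (simp add: algebra_simps)
      also have "\<dots> = (Q1 1 x y * p0) * d 0" using c[OF \<open>x \<le> 1\<close> \<open>y \<le> 1\<close>] by (simp add: algebra_simps)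
      finally show "Q1 0 x y * p1 = Q1 1 x y * p0" using False by simp
    qed
    have mx0: "marg_XT P 0 0 = Q1 0 0 0 + Q1 0 0 1" using dp_facts(4)[OF d1, of 0] unfolding marg_XT_def s01 by simp
    have mx1: "marg_XT P 0 1 = Q1 1 0 0 + Q1 1 0 1" using dp_facts(4)[OF d1, of 1] unfolding marg_XT_def s01 by simp
    have my0: "marg_YT P 0 0 = Q1 0 0 0 + Q1 0 1 0" using dp_facts(6)[OF d1, of 0] unfolding marg_YT_def s01 by simp
    have my1: "marg_YT P 0 1 = Q1 1 0 0 + Q1 1 1 0" using dp_facts(6)[OF d1, of 1] unfolding marg_YT_def s01 by simp
    have "marg_XT P 0 0 * p1 = marg_XT P 0 1 * p0"
      unfolding mx0 mx1 using r[of 0 0] r[of 0 1] by (simp add: algebra_simps)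
    then have X: "marg_XT P 0 0 / p0 = marg_XT P 0 1 / p1" using p0pos p1pos by (simp add: field_simps)
    have "marg_YT P 0 0 * p1 = marg_YT P 0 1 * p0"
      unfolding my0 my1 using r[of 0 0] r[of 1 0] by (simp add: algebra_simps)
    then have Y: "marg_YT P 0 0 / p0 = marg_YT P 0 1 / p1" using p0pos p1pos by (simp add: field_simps)
    from X Y hyp show ?thesis unfolding p0_def p1_def by blast
  qed
qed



theorem mainTheorem17:
  fixes P :: "nat \<Rightarrow> nat \<Rightarrow> nat \<Rightarrow> real"
  assumes "P \<in> joint_dists"
    and "marg_T P 0 > 0" and "marg_T P 1 > 0"
    and "\<not> (marg_XT P 0 0 / marg_T P 0 = marg_XT P 0 1 / marg_T P 1
            \<and> marg_YT P 0 0 / marg_T P 0 = marg_YT P 0 1 / marg_T P 1)"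
  shows "\<exists>Q. argmax_cond_entropy P = {Q}"
proof -
  have Pn: "\<forall>t x y. 0 \<le> P t x y"
    and Psu: "\<forall>t x y. P t x y \<noteq> 0 \<longrightarrow> t \<le> 1 \<and> x \<le> 1 \<and> y \<le> 1"
    using assms(1) unfolding joint_dists_def mem01 by auto
  have "(\<Sum>t\<in>{0,1}. \<Sum>x\<in>{0,1}. \<Sum>y\<in>{0,1}. P t x y) = 1" using assms(1) unfolding joint_dists_def by auto
  then have Ps: "P 0 0 0 + P 0 0 1 + P 0 1 0 + P 0 1 1 + P 1 0 0 + P 1 0 1 + P 1 1 0 + P 1 1 1 = 1"
    unfolding s01 by simp
  have Pn8: "0 \<le> P 0 0 0" "0 \<le> P 0 0 1" "0 \<le> P 0 1 0" "0 \<le> P 0 1 1"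
     "0 \<le> P 1 0 0" "0 \<le> P 1 0 1" "0 \<le> P 1 1 0" "0 \<le> P 1 1 1" using Pn by auto
  define D where "D = (\<lambda>(z::real\<times>real) (t::nat) (x::nat) (y::nat).
      if t \<le> 1 \<and> x \<le> 1 \<and> y \<le> 1 then (if t = 0 then fst z else snd z) * (if x = y then 1 else -1) else (0::real))"
  define R where "R = (\<lambda>z t x y. P t x y + D z t x y)"
  define C where "C = {z::real\<times>real. 0 \<le> P 0 0 0 + fst z \<and> 0 \<le> P 0 0 1 - fst z \<and> 0 \<le> P 0 1 0 - fst z
      \<and> 0 \<le> P 0 1 1 + fst z \<and> 0 \<le> P 1 0 0 + snd z \<and> 0 \<le> P 1 0 1 - snd z
      \<and> 0 \<le> P 1 1 0 - snd z \<and> 0 \<le> P 1 1 1 + snd z}"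
  define K where "K = ({-1..1} \<times> {-1..1}) \<inter> C"
  have Dx: "\<And>z t x. D z t x 0 + D z t x 1 = 0" by (auto simp: D_def le1)
  have Dy: "\<And>z t y. D z t 0 y + D z t 1 y = 0" by (auto simp: D_def le1)
  have Dout: "\<And>z t x y. \<not> (t \<le> 1 \<and> x \<le> 1 \<and> y \<le> 1) \<Longrightarrow> D z t x y = 0"
    unfolding D_def by (intro if_not_P)
  have Rv: "\<And>z. R z 0 0 0 = P 0 0 0 + fst z" "\<And>z. R z 0 0 1 = P 0 0 1 - fst z"
     "\<And>z. R z 0 1 0 = P 0 1 0 - fst z" "\<And>z. R z 0 1 1 = P 0 1 1 + fst z"
     "\<And>z. R z 1 0 0 = P 1 0 0 + snd z" "\<And>z. R z 1 0 1 = P 1 0 1 - snd z"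
     "\<And>z. R z 1 1 0 = P 1 1 0 - snd z" "\<And>z. R z 1 1 1 = P 1 1 1 + snd z"
    by (simp_all add: R_def D_def)
  have Rnn: "\<forall>t x y. 0 \<le> R z t x y" if "z \<in> C" for z
  proof (intro allI)
    fix t x y
    show "0 \<le> R z t x y"
    proof (cases "t \<le> 1 \<and> x \<le> 1 \<and> y \<le> 1")
      case True
      then have "(t = 0 \<or> t = 1) \<and> (x = 0 \<or> x = 1) \<and> (y = 0 \<or> y = 1)" unfolding le1 by auto
      then show ?thesis using that unfolding C_def by (auto simp: R_def D_def)
    next
      case False
      then show ?thesis using Pn by (simp add: R_def Dout)
    qed
  qed
  have RinD: "R z \<in> Delta_P P" if "z \<in> C" for z
  proof -
    have "\<forall>t x y. R z t x y \<noteq> 0 \<longrightarrow> t \<in> {0,1} \<and> x \<in> {0,1} \<and> y \<in> {0,1}"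
    proof (intro allI impI)
      fix t x y assume h: "R z t x y \<noteq> 0"
      show "t \<in> {0,1} \<and> x \<in> {0,1} \<and> y \<in> {0,1}"
      proof (rule ccontr)
        assume "\<not> (t \<in> {0,1} \<and> x \<in> {0,1} \<and> y \<in> {0,1})"
        then have nc: "\<not> (t \<le> 1 \<and> x \<le> 1 \<and> y \<le> 1)" unfolding mem01 .
        then have "P t x y = 0" using Psu by blast
        then show False using h nc by (simp add: R_def Dout)
      qed
    qed
    moreover have "(\<Sum>t\<in>{0,1}. \<Sum>x\<in>{0,1}. \<Sum>y\<in>{0,1}. R z t x y) = 1"
      unfolding s01 Rv using Ps by simp
    ultimately have "R z \<in> joint_dists" using Rnn[OF that] unfolding joint_dists_def by blast
    moreover have "\<forall>x t. marg_XT (R z) x t = marg_XT P x t"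
      using Dx unfolding marg_XT_def s01 R_def by (simp add: algebra_simps)
    moreover have "\<forall>y t. marg_YT (R z) y t = marg_YT P y t"
      using Dy unfolding marg_YT_def s01 R_def by (simp add: algebra_simps)
    ultimately show ?thesis unfolding Delta_P_def by blast
  qed
  have DinR: "\<exists>z\<in>K. Q = R z" if "Q \<in> Delta_P P" for Q
  proof -
    define z where "z = (Q 0 0 0 - P 0 0 0, Q 1 0 0 - P 1 0 0)"
    note f = dp_facts[OF that]
    have q: "\<And>t. Q t 0 1 = P t 0 1 - (Q t 0 0 - P t 0 0)"
       "\<And>t. Q t 1 0 = P t 1 0 - (Q t 0 0 - P t 0 0)"
       "\<And>t. Q t 1 1 = P t 1 1 + (Q t 0 0 - P t 0 0)"
      using f(4) f(6) f(5) by (smt (verit))+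
    have QR: "Q = R z"
    proof (intro ext)
      fix t x y
      show "Q t x y = R z t x y"
      proof (cases "t \<le> 1 \<and> x \<le> 1 \<and> y \<le> 1")
        case True
        then have "(t = 0 \<or> t = 1) \<and> (x = 0 \<or> x = 1) \<and> (y = 0 \<or> y = 1)" unfolding le1 by auto
        then show ?thesis using q[of 0] q[of 1] by (auto simp: R_def D_def z_def)
      next
        case False
        then have "Q t x y = 0" using f(2) by blast
        moreover have "P t x y = 0" using Psu False by blast
        ultimately show ?thesis using False by (simp add: R_def Dout)
      qed
    qed
    have Qn8: "0 \<le> Q 0 0 0" "0 \<le> Q 0 0 1" "0 \<le> Q 0 1 0" "0 \<le> Q 0 1 1"
     "0 \<le> Q 1 0 0" "0 \<le> Q 1 0 1" "0 \<le> Q 1 1 0" "0 \<le> Q 1 1 1" using f(1) by auto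
    have "z \<in> C" unfolding C_def z_def mem_Collect_eq fst_conv snd_conv
      using Qn8 q[of 0] q[of 1] by (intro conjI; linarith)
    moreover have "z \<in> {-1..1} \<times> {-1..1}"
      unfolding z_def mem_Times_iff atLeastAtMost_iff fst_conv snd_conv
      using Qn8 Pn8 Ps q[of 0] q[of 1] by (intro conjI; linarith)
    ultimately show ?thesis using QR unfolding K_def by blast
  qed
  define F where "F = (\<lambda>z. G (R z 0 0 0) (R z 1 0 0) / ln 2 + G (R z 0 0 1) (R z 1 0 1) / ln 2
     + G (R z 0 1 0) (R z 1 1 0) / ln 2 + G (R z 0 1 1) (R z 1 1 1) / ln 2)"
  have HF: "cond_entropy (R z) = F z" if "z \<in> C" for z
    unfolding F_def using ent[OF Rnn[OF that]] .
  have Rc: "continuous_on K (\<lambda>z. R z t x y)" for t x y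
  proof (cases "t \<le> 1 \<and> x \<le> 1 \<and> y \<le> 1")
    case True
    then have "(\<lambda>z. R z t x y) = (\<lambda>z. P t x y + (if t = 0 then fst z else snd z) * (if x = y then 1 else -1))"
      by (simp add: R_def D_def fun_eq_iff)
    moreover have "continuous_on K (\<lambda>z. P t x y + (if t = 0 then fst z else snd z) * (if x = y then 1 else -1))"
      by (cases "t = 0") (auto intro!: continuous_intros)
    ultimately show ?thesis by metis
  next
    case False
    then have "(\<lambda>z. R z t x y) = (\<lambda>z. P t x y)" by (simp add: R_def Dout fun_eq_iff)
    moreover have "continuous_on K (\<lambda>z. P t x y)" by (rule continuous_on_const)
    ultimately show ?thesis by metis
  qed
  have KC: "K \<subseteq> C" unfolding K_def by blast
  have Knn: "\<forall>z\<in>K. 0 \<le> R z t x y" for t x y using Rnn KC by blast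
  have contF: "continuous_on K F"
    unfolding F_def
    by (intro continuous_on_add continuous_on_divide cont_G Rc Knn continuous_on_const) auto
  have closedC: "closed C" unfolding C_def
    by (intro closed_Collect_conj closed_Collect_le continuous_intros)
  have compK: "compact K" unfolding K_def
    by (intro compact_Int_closed compact_Times compact_Icc closedC)
  have "(0,0) \<in> K" unfolding K_def C_def using Pn8 by auto
  then have Kne: "K \<noteq> {}" by blast
  obtain zs where zs: "zs \<in> K" "\<forall>z\<in>K. F z \<le> F zs"
    using continuous_attains_sup[OF compK Kne contF] by blast
  have zsC: "zs \<in> C" using zs(1) KC by blast
  have mem: "R zs \<in> argmax_cond_entropy P"
    unfolding argmax_cond_entropy_def
  proof (intro CollectI conjI ballI)
    show "R zs \<in> Delta_P P" using RinD[OF zsC] .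
    fix Q' assume "Q' \<in> Delta_P P"
    then obtain z' where z': "z' \<in> K" "Q' = R z'" using DinR by blast
    have "cond_entropy Q' = F z'" using z' KC HF by blast
    also have "\<dots> \<le> F zs" using zs(2) z'(1) by blast
    also have "\<dots> = cond_entropy (R zs)" using HF[OF zsC] by simp
    finally show "cond_entropy Q' \<le> cond_entropy (R zs)" .
  qed
  show ?thesis
  proof (intro exI[of _ "R zs"] equalityI subsetI)
    fix Q assume "Q \<in> argmax_cond_entropy P"
    then have "Q = R zs" using uniq[OF assms(2) assms(3) assms(4) _ mem] by blast
    then show "Q \<in> {R zs}" by simp
  next
    fix Q assume "Q \<in> {R zs}"
    then show "Q \<in> argmax_cond_entropy P" using mem by simp
  qed
qed

end
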